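(* Let $n\ge2$, $k\in\mathbb{Z}$, $\beta=(\beta_1,\dots,\beta_n)\in\mathbb{Z}^n$ and $1\le\ell\le n$. Then \[ q^{\beta_\ell+k}\Big[x^\beta(1-q^{-1/2}yx_\ell^{-1})\prod_{\substack{i=1\\ i\ne\ell}}^n\Big(1-z\frac{x_\ell}{x_i}\Big)\Big]h_k(z,q)=z^{n-1}\Big[x^\beta(1-q^{1/2}zyx_\ell^{-1})\prod_{\substack{i=1\\ i\ne\ell}}^n\Big(1-z^{-1}\frac{x_\ell}{x_i}\Big)\Big]h_k(z,q). \]
   Context: $q,z,y$ are indeterminates (with $|q|<1$, $|z|<1$); $(a;q)_\infty=\prod_{k\ge0}(1-aq^k)$. $x=x_1\cdots x_n$, $x^\beta=x_1^{\beta_1}\cdots x_n^{\beta_n}$, and \[ h_k(z,q):=x^{-k}\prod_{1\le i<j\le n}(x_i-x_j)\prod_{\substack{i,j=1\\ i\ne j}}^n\frac{(qx_ix_j^{-1};q)_\infty}{(zx_ix_j^{-1};q)_\infty}\prod_{i=1}^n\frac{(q^{1/2}x_iy;q)_\infty}{(q^{1/2}x_iyz;q)_\infty}, \] expanded as a formal power series in $z,q^{1/2}$ with coefficients Laurent polynomials in $x_1,\dots,x_n$ (polynomial in $y$). $[x^\alpha]F$ denotes the coefficient of $x^\alpha$ in $F$, extended linearly: for a Laurent polynomial $P=\sum_\alpha p_\alpha x^\alpha$ (coefficients depending on $y,z,q$), $[P]F:=\sum_\alpha p_\alpha[x^\alpha]F$. *)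

theory Defs
  imports "HOL-Library.Poly_Mapping"
begin

text \<open>Variables: X i is x_i (i = 1..n), Y is y, Z is z, T is q^(1/2).\<close>

datatype var = X nat | Y | Z | T

type_synonym mono = "var \<Rightarrow>\<^sub>0 int"
type_synonym lpoly = "mono \<Rightarrow>\<^sub>0 int"
type_synonym series = "mono \<Rightarrow> int"

definition mon :: "mono \<Rightarrow> lpoly" where
  "mon \<mu> = Poly_Mapping.single \<mu> 1"

definition vpow :: "var \<Rightarrow> int \<Rightarrow> lpoly" where
  "vpow v e = mon (Poly_Mapping.single v e)"

abbreviation xx :: "nat \<Rightarrow> lpoly" where "xx i \<equiv> vpow (X i) 1"
abbreviation xinv :: "nat \<Rightarrow> lpoly" where "xinv i \<equiv> vpow (X i) (-1)"
abbreviation yv :: lpoly where "yv \<equiv> vpow Y 1"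
abbreviation zv :: lpoly where "zv \<equiv> vpow Z 1"
abbreviation tv :: lpoly where "tv \<equiv> vpow T 1"
abbreviation qv :: lpoly where "qv \<equiv> vpow T 2"

text \<open>Truncated q-Pochhammer (a;q)_N and truncated expansion of 1/(a;q)_\<infinity>
  (each geometric series cut after N terms, first N factors).\<close>
definition poch_tr :: "nat \<Rightarrow> lpoly \<Rightarrow> lpoly" where
  "poch_tr N a = (\<Prod>k<N. 1 - a * qv ^ k)"

definition ipoch_tr :: "nat \<Rightarrow> lpoly \<Rightarrow> lpoly" where
  "ipoch_tr N a = (\<Prod>k<N. \<Sum>m<N. (a * qv ^ k) ^ m)"

definition h_tr :: "nat \<Rightarrow> int \<Rightarrow> nat \<Rightarrow> lpoly" where
  "h_tr n k N =
     (\<Prod>i\<in>{1..n}. vpow (X i) (-k))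
   * (\<Prod>(i,j)\<in>{(i,j). 1 \<le> i \<and> i < j \<and> j \<le> n}. xx i - xx j)
   * (\<Prod>(i,j)\<in>{(i,j). i \<in> {1..n} \<and> j \<in> {1..n} \<and> i \<noteq> j}.
        poch_tr N (qv * xx i * xinv j) * ipoch_tr N (zv * xx i * xinv j))
   * (\<Prod>i\<in>{1..n}. poch_tr N (tv * xx i * yv) * ipoch_tr N (tv * xx i * yv * zv))"

definition h :: "nat \<Rightarrow> int \<Rightarrow> series" where
  "h n k \<mu> = (THE c. eventually (\<lambda>N. Poly_Mapping.lookup (h_tr n k N) \<mu> = c) sequentially)"

definition is_xvar :: "var \<Rightarrow> bool" where
  "is_xvar v = (case v of X _ \<Rightarrow> True | _ \<Rightarrow> False)"

definition xpart :: "mono \<Rightarrow> mono" where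
  "xpart \<nu> = Poly_Mapping.mapp (\<lambda>v c. if is_xvar v then c else 0) \<nu>"

text \<open>[P]F = \<Sum>_\<alpha> p_\<alpha> [x^\<alpha>]F: a series in y,z,q^(1/2) (no x's).\<close>
definition bracket :: "lpoly \<Rightarrow> series \<Rightarrow> series" where
  "bracket P F \<mu> =
     (if (\<forall>i. Poly_Mapping.lookup \<mu> (X i) = 0)
      then (\<Sum>\<nu>\<in>Poly_Mapping.keys P. Poly_Mapping.lookup P \<nu> * F (\<mu> - (\<nu> - xpart \<nu>) + xpart \<nu>))
      else 0)"

definition lmul :: "lpoly \<Rightarrow> series \<Rightarrow> series" where
  "lmul p F \<mu> = (\<Sum>\<nu>\<in>Poly_Mapping.keys p. Poly_Mapping.lookup p \<nu> * F (\<mu> - \<nu>))"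

end

theory Submission
  imports Defs
begin

lemma mon_frag: "mon a = frag_of a" by (simp add: mon_def)

lemma mon_mult: "mon a * mon b = mon (a + b)"
  by (simp add: mon_def mult_single)

lemma mon_zero: "mon 0 = 1"
  by (simp add: mon_def)

lemma vpow_mult: "vpow v a * vpow v b = vpow v (a + b)"
  by (simp add: vpow_def mon_mult single_add)

lemma vpow_zero: "vpow v 0 = 1"
  by (simp add: vpow_def mon_zero)

lemma lookup_mon: "Poly_Mapping.lookup (mon a) b = (if b = a then 1 else 0)"
  by (simp add: mon_def lookup_single when_def)

lemma keys_mon: "Poly_Mapping.keys (mon a) = {a}"
  by (simp add: mon_def)

section \<open>Pushforward along additive maps\<close>

definition pm :: "(mono \<Rightarrow> mono) \<Rightarrow> lpoly \<Rightarrow> lpoly" where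
  "pm f P = frag_extend (\<lambda>\<nu>. frag_of (f \<nu>)) P"

lemma pm_diff: "pm f (P - Q) = pm f P - pm f Q"
  by (simp add: pm_def frag_extend_diff)

lemma pm_add: "pm f (P + Q) = pm f P + pm f Q"
  by (simp add: pm_def frag_extend_add)

lemma pm_minus: "pm f (- P) = - pm f P"
  by (simp add: pm_def frag_extend_minus)

lemma pm_zero: "pm f 0 = 0"
  by (simp add: pm_def)

lemma pm_mon: "pm f (mon a) = mon (f a)"
  by (simp add: pm_def mon_def)

locale addmap =
  fixes f :: "mono \<Rightarrow> mono"
  assumes f_add: "\<And>a b. f (a + b) = f a + f b"
begin

lemma f_zero: "f 0 = 0"
  using f_add[of 0 0] by simp

lemma pm_one: "pm f 1 = 1"
  using pm_mon[of f 0] by (simp add: mon_zero f_zero)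

lemma pm_mult_single: "pm f (frag_of a * Q) = pm f (frag_of a) * pm f Q"
proof -
  have "Poly_Mapping.keys Q \<subseteq> UNIV" by simp
  then show ?thesis
  proof (induction Q rule: frag_induction)
    case zero then show ?case by (simp add: pm_zero)
  next
    case (one x) then show ?case
      by (simp add: mult_single pm_mon[unfolded mon_def] f_add)
  next
    case (diff a b) then show ?case
      by (simp add: right_diff_distrib pm_diff)
  qed
qed

lemma pm_mult: "pm f (P * Q) = pm f P * pm f Q"
proof -
  have "Poly_Mapping.keys P \<subseteq> UNIV" by simp
  then show ?thesis
  proof (induction P rule: frag_induction)
    case zero then show ?case by (simp add: pm_zero)
  next
    case (one x) show ?case by (rule pm_mult_single)
  next
    case (diff a b) then show ?case
      by (simp add: left_diff_distrib pm_diff)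
  qed
qed

lemma pm_prod: "pm f (\<Prod>i\<in>I. g i) = (\<Prod>i\<in>I. pm f (g i))"
proof (cases "finite I")
  case True then show ?thesis
    by (induction I rule: finite_induct) (simp_all add: pm_one pm_mult)
next
  case False then show ?thesis by (simp add: pm_one)
qed

lemma pm_power: "pm f (P ^ m) = pm f P ^ m"
  by (induction m) (simp_all add: pm_one pm_mult)

lemma pm_sum: "pm f (\<Sum>i\<in>I. g i) = (\<Sum>i\<in>I. pm f (g i))"
proof (cases "finite I")
  case True then show ?thesis
    by (induction I rule: finite_induct) (simp_all add: pm_zero pm_add)
next
  case False then show ?thesis by (simp add: pm_zero)
qed

end

lemma lookup_pm:
  assumes "\<And>x. g (f x) = x" "\<And>x. f (g x) = x"
  shows "Poly_Mapping.lookup (pm f P) \<mu> = Poly_Mapping.lookup P (g \<mu>)"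
proof -
  have "Poly_Mapping.keys P \<subseteq> UNIV" by simp
  then show ?thesis
  proof (induction P rule: frag_induction)
    case zero then show ?case by (simp add: pm_zero)
  next
    case (one x) then show ?case
      using assms by (auto simp add: pm_mon[unfolded mon_def])
  next
    case (diff a b) then show ?case
      by (simp add: pm_diff lookup_minus)
  qed
qed

section \<open>Multiplication of series\<close>

lemma lmul_superset:
  assumes "finite S" "Poly_Mapping.keys P \<subseteq> S"
  shows "lmul P F \<mu> = (\<Sum>\<nu>\<in>S. Poly_Mapping.lookup P \<nu> * F (\<mu> - \<nu>))"
  unfolding lmul_def
  by (rule sum.mono_neutral_left) (use assms in \<open>auto simp: in_keys_iff\<close>)

lemma lmul_diff_left: "lmul (P - Q) F = lmul P F - lmul Q F"
proof
  fix \<mu>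
  let ?S = "Poly_Mapping.keys P \<union> Poly_Mapping.keys Q"
  have "Poly_Mapping.keys (P - Q) \<subseteq> ?S" by (simp add: keys_diff)
  then have "lmul (P - Q) F \<mu> = (\<Sum>\<nu>\<in>?S. Poly_Mapping.lookup (P - Q) \<nu> * F (\<mu> - \<nu>))"
    by (intro lmul_superset) auto
  also have "\<dots> = (\<Sum>\<nu>\<in>?S. Poly_Mapping.lookup P \<nu> * F (\<mu> - \<nu>)) - (\<Sum>\<nu>\<in>?S. Poly_Mapping.lookup Q \<nu> * F (\<mu> - \<nu>))"
    by (simp add: lookup_minus left_diff_distrib sum_subtractf)
  also have "\<dots> = lmul P F \<mu> - lmul Q F \<mu>"
    by (subst (1 2) lmul_superset[where S="?S"]) auto
  finally show "lmul (P - Q) F \<mu> = (lmul P F - lmul Q F) \<mu>" by simp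
qed

lemma lmul_zero_left: "lmul 0 F = (\<lambda>_. 0)"
  by (simp add: lmul_def fun_eq_iff)

lemma lmul_diff_right: "lmul P (F - G) = lmul P F - lmul P G"
  by (simp add: lmul_def fun_eq_iff right_diff_distrib sum_subtractf)

lemma lmul_single: "lmul (frag_of a) F = (\<lambda>\<mu>. F (\<mu> - a))"
  by (simp add: lmul_def fun_eq_iff)

lemma lmul_mon: "lmul (mon a) F \<mu> = F (\<mu> - a)"
  by (simp add: lmul_single mon_def)

lemma lmul_mult_single:
  "lmul (frag_of a * Q) F = lmul (frag_of a) (lmul Q F)"
proof -
  have "Poly_Mapping.keys Q \<subseteq> UNIV" by simp
  then show ?thesis
  proof (induction Q rule: frag_induction)
    case zero then show ?case by (simp add: lmul_zero_left lmul_single)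
  next
    case (one x) then show ?case
      by (simp add: mult_single lmul_single diff_diff_eq add.commute)
  next
    case (diff b c) then show ?case
      by (metis right_diff_distrib lmul_diff_left lmul_diff_right)
  qed
qed

lemma lmul_mult: "lmul (P * Q) F = lmul P (lmul Q F)"
proof -
  have "Poly_Mapping.keys P \<subseteq> UNIV" by simp
  then show ?thesis
  proof (induction P rule: frag_induction)
    case zero then show ?case by (simp add: lmul_zero_left fun_eq_iff)
  next
    case (one x) show ?case by (rule lmul_mult_single)
  next
    case (diff b c) then show ?case
      by (simp add: left_diff_distrib lmul_diff_left)
  qed
qed

lemma lookup_single_mult: "Poly_Mapping.lookup (frag_of (a::mono) * Q) \<mu> = Poly_Mapping.lookup Q (\<mu> - a)"
proof -
  have "Poly_Mapping.keys Q \<subseteq> UNIV" by simp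
  then show ?thesis
  proof (induction Q rule: frag_induction)
    case zero then show ?case by simp
  next
    case (one x) then show ?case
      by (auto simp add: mult_single)
  next
    case (diff b c) then show ?case
      by (simp add: right_diff_distrib lookup_minus)
  qed
qed

lemma lmul_lookup: "lmul P (Poly_Mapping.lookup Q) = Poly_Mapping.lookup (P * Q)"
proof -
  have "Poly_Mapping.keys P \<subseteq> UNIV" by simp
  then show ?thesis
  proof (induction P rule: frag_induction)
    case zero then show ?case by (simp add: lmul_zero_left fun_eq_iff)
  next
    case (one x) then show ?case
      by (simp add: lmul_single lookup_single_mult fun_eq_iff)
  next
    case (diff b c) then show ?case
      by (simp add: left_diff_distrib lmul_diff_left fun_eq_iff lookup_minus)
  qed
qed

lemma lmul_bij:
  assumes "\<And>x. g (f x) = x" "\<And>x. f (g x) = x"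
  shows "lmul (pm f P) F \<mu> = (\<Sum>\<nu>\<in>Poly_Mapping.keys P. Poly_Mapping.lookup P \<nu> * F (\<mu> - f \<nu>))"
proof -
  have k: "Poly_Mapping.keys (pm f P) = f ` Poly_Mapping.keys P"
  proof -
    have "\<nu> \<in> Poly_Mapping.keys (pm f P) \<longleftrightarrow> g \<nu> \<in> Poly_Mapping.keys P" for \<nu>
      by (simp add: in_keys_iff lookup_pm[OF assms])
    then show ?thesis using assms by (auto simp: image_iff) (metis)
  qed
  have inj: "inj_on f (Poly_Mapping.keys P)" by (metis assms(1) inj_onI)
  show ?thesis unfolding lmul_def k
    by (simp add: sum.reindex[OF inj] lookup_pm[OF assms] assms)
qed

section \<open>Weights\<close>

definition wt :: "mono \<Rightarrow> int" where
  "wt \<nu> = Poly_Mapping.lookup \<nu> T + 3 * Poly_Mapping.lookup \<nu> Z"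

lemma wt_add: "wt (a + b) = wt a + wt b"
  by (simp add: wt_def lookup_add)

lemma wt_zero: "wt 0 = 0" by (simp add: wt_def)

definition hi :: "int \<Rightarrow> lpoly \<Rightarrow> bool" where
  "hi d P \<longleftrightarrow> (\<forall>\<nu>\<in>Poly_Mapping.keys P. d \<le> wt \<nu>)"

lemma hi_zero [simp]: "hi d 0" by (simp add: hi_def)

lemma hi_one: "hi 0 1" by (simp add: hi_def wt_zero)

lemma hi_mono: "hi d P \<Longrightarrow> d' \<le> d \<Longrightarrow> hi d' P"
  by (auto simp: hi_def)

lemma hi_add: "hi d P \<Longrightarrow> hi d Q \<Longrightarrow> hi d (P + Q)"
  using keys_add[of P Q] by (auto simp: hi_def)

lemma hi_minus: "hi d P \<Longrightarrow> hi d (- P)"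
  by (simp add: hi_def)

lemma hi_diff: "hi d P \<Longrightarrow> hi d Q \<Longrightarrow> hi d (P - Q)"
  using keys_diff[of P Q] by (auto simp: hi_def)

lemma hi_mult: "hi a P \<Longrightarrow> hi b Q \<Longrightarrow> hi (a + b) (P * Q)"
  using keys_mult[of P Q] by (fastforce simp: hi_def wt_add)

lemma hi_mult': "hi a P \<Longrightarrow> hi b Q \<Longrightarrow> d \<le> a + b \<Longrightarrow> hi d (P * Q)"
  using hi_mult hi_mono by blast

lemma hi_mon: "hi d (mon m) \<longleftrightarrow> d \<le> wt m"
  by (simp add: hi_def keys_mon)

lemma hi_sum: "(\<And>i. i \<in> I \<Longrightarrow> hi d (g i)) \<Longrightarrow> hi d (\<Sum>i\<in>I. g i)"
proof (induction I rule: infinite_finite_induct)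
  case (insert x F) then show ?case by (simp add: hi_add)
qed auto

lemma hi_prod0: "(\<And>i. i \<in> I \<Longrightarrow> hi 0 (g i)) \<Longrightarrow> hi 0 (\<Prod>i\<in>I. g i)"
proof (induction I rule: infinite_finite_induct)
  case (insert x F) then show ?case using hi_mult[of 0 "g x" 0] by simp
qed (auto simp: hi_one)

lemma hi_power: "hi a P \<Longrightarrow> hi (int m * a) (P ^ m)"
proof (induction m)
  case 0 then show ?case by (simp add: hi_one)
next
  case (Suc m) then show ?case using hi_mult[of a P "int m * a" "P ^ m"]
    by (simp add: algebra_simps)
qed

definition eqv :: "int \<Rightarrow> lpoly \<Rightarrow> lpoly \<Rightarrow> bool" where
  "eqv d P Q \<longleftrightarrow> hi d (P - Q)"

lemma eqv_refl: "eqv d P P" by (simp add: eqv_def)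

lemma eqv_sym: "eqv d P Q \<Longrightarrow> eqv d Q P"
  using hi_minus[of d "P - Q"] by (simp add: eqv_def)

lemma eqv_trans: "eqv d P Q \<Longrightarrow> eqv d Q R \<Longrightarrow> eqv d P R"
  using hi_add[of d "P - Q" "Q - R"] by (simp add: eqv_def)

lemma eqv_mono: "eqv d P Q \<Longrightarrow> d' \<le> d \<Longrightarrow> eqv d' P Q"
  by (auto simp: eqv_def intro: hi_mono)

lemma eqv_mult:
  assumes "eqv d P Q" "eqv d R S" "hi 0 P" "hi 0 S"
  shows "eqv d (P * R) (Q * S)"
proof -
  have "P * R - Q * S = P * (R - S) + (P - Q) * S" by (simp add: algebra_simps)
  moreover have "hi d (P * (R - S))" using hi_mult[of 0 P d "R - S"] assms by (simp add: eqv_def)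
  moreover have "hi d ((P - Q) * S)" using hi_mult[of d "P - Q" 0 S] assms by (simp add: eqv_def)
  ultimately show ?thesis by (simp add: eqv_def hi_add)
qed

lemma eqv_mult_left:
  assumes "hi a K" "eqv d P Q"
  shows "eqv (a + d) (K * P) (K * Q)"
  using hi_mult[of a K d "P - Q"] assms by (simp add: eqv_def right_diff_distrib)

lemma eqv_prod:
  assumes "finite I" "\<And>i. i \<in> I \<Longrightarrow> eqv d (f i) (g i)"
    "\<And>i. i \<in> I \<Longrightarrow> hi 0 (f i)" "\<And>i. i \<in> I \<Longrightarrow> hi 0 (g i)"
  shows "eqv d (\<Prod>i\<in>I. f i) (\<Prod>i\<in>I. g i)"
  using assms
proof (induction I rule: finite_induct)
  case empty then show ?case by (simp add: eqv_refl)
next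
  case (insert x F)
  then show ?case
    by (simp add: eqv_mult hi_prod0)
qed

lemma eqv_lookup: "eqv d P Q \<Longrightarrow> wt \<mu> < d \<Longrightarrow> Poly_Mapping.lookup P \<mu> = Poly_Mapping.lookup Q \<mu>"
proof (rule ccontr)
  assume a: "eqv d P Q" "wt \<mu> < d" "Poly_Mapping.lookup P \<mu> \<noteq> Poly_Mapping.lookup Q \<mu>"
  then have "\<mu> \<in> Poly_Mapping.keys (P - Q)" by (simp add: in_keys_iff lookup_minus)
  with a show False by (auto simp: eqv_def hi_def)
qed

lemma eqv_hi_diff: "hi d E \<Longrightarrow> eqv d P (P - E)"
  by (simp add: eqv_def)

section \<open>Generic facts about truncated Pochhammers\<close>

definition gs :: "nat \<Rightarrow> lpoly \<Rightarrow> lpoly" where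
  "gs N c = (\<Sum>m<N. c ^ m)"

lemma ipoch_gs: "ipoch_tr N a = (\<Prod>k<N. gs N (a * qv ^ k))"
  by (simp add: ipoch_tr_def gs_def)

lemma hi_qv: "hi 2 qv" by (simp add: vpow_def hi_mon wt_def lookup_single)

lemma hi_qv_pow: "hi (2 * int k) (qv ^ k)"
  using hi_power[OF hi_qv, of k] by (simp add: mult.commute)

lemma hi_qvc: "hi 0 c \<Longrightarrow> hi 0 (qv * c)"
  using hi_mult[OF hi_qv, of 0 c] hi_mono by fastforce

lemma G1: "poch_tr N c * (1 - qv ^ N * c) = (1 - c) * poch_tr N (qv * c)"
proof (induction N)
  case 0 then show ?case by (simp add: poch_tr_def)
next
  case (Suc N)
  have "poch_tr (Suc N) c * (1 - qv ^ Suc N * c) = (poch_tr N c * (1 - qv ^ N * c)) * (1 - qv ^ Suc N * c)"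
    by (simp add: poch_tr_def mult.commute)
  also have "\<dots> = (1 - c) * (poch_tr N (qv * c) * (1 - qv * c * qv ^ N))"
    by (simp only: Suc) (simp add: algebra_simps)
  also have "\<dots> = (1 - c) * poch_tr (Suc N) (qv * c)"
    by (simp add: poch_tr_def)
  finally show ?case .
qed

lemma G2: "ipoch_tr N c * gs N (qv ^ N * c) = gs N c * ipoch_tr N (qv * c)"
proof -
  let ?f = "\<lambda>k. gs N (c * qv ^ k)"
  have "ipoch_tr N c * gs N (qv ^ N * c) = (\<Prod>k<Suc N. ?f k)"
    by (simp add: ipoch_gs mult.commute)
  also have "\<dots> = ?f 0 * (\<Prod>k<N. ?f (Suc k))"
    by (rule prod.lessThan_Suc_shift)
  also have "\<dots> = gs N c * ipoch_tr N (qv * c)"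
    by (simp add: ipoch_gs algebra_simps)
  finally show ?thesis .
qed

lemma G3: "(1 - c) * gs N c = 1 - c ^ N"
  by (simp add: gs_def one_diff_power_eq)

lemma hi_poch: "hi 0 c \<Longrightarrow> hi 0 (poch_tr N c)"
  unfolding poch_tr_def
  by (intro hi_prod0 hi_diff hi_one hi_mult'[OF _ hi_qv_pow]) auto

lemma hi_gs: "hi 0 c \<Longrightarrow> hi 0 (gs N c)"
  unfolding gs_def using hi_power[of 0 c] by (intro hi_sum) auto

lemma hi_ipoch: "hi 0 c \<Longrightarrow> hi 0 (ipoch_tr N c)"
  unfolding ipoch_gs
  by (intro hi_prod0 hi_gs hi_mult'[OF _ hi_qv_pow]) auto

lemma W2:
  assumes "hi a c" "0 \<le> a" "1 \<le> N"
  shows "eqv a (gs N c) 1"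
proof -
  have "gs N c = (\<Sum>m<Suc (N - 1). c ^ m)" using assms by (simp add: gs_def)
  also have "\<dots> = 1 + (\<Sum>m<N - 1. c ^ Suc m)"
    by (subst sum.lessThan_Suc_shift) simp
  finally have e: "gs N c - 1 = (\<Sum>m<N - 1. c ^ Suc m)" by simp
  have "hi a (c ^ Suc m)" for m
  proof (rule hi_mono[OF hi_power[OF assms(1), of "Suc m"]])
    have "0 \<le> int m * a" using assms(2) by simp
    then show "a \<le> int (Suc m) * a" by (simp add: algebra_simps)
  qed
  then show ?thesis by (simp add: eqv_def e hi_sum)
qed

lemma PA:
  assumes "hi 0 c"
  shows "eqv (2 * int N) ((1 - c) * poch_tr N (qv * c)) (poch_tr N c)"
proof -
  have "(1 - c) * poch_tr N (qv * c) = poch_tr N c - poch_tr N c * (qv ^ N * c)"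
    using G1[of N c] by (simp add: algebra_simps)
  moreover have "hi (2 * int N) (poch_tr N c * (qv ^ N * c))"
  proof -
    have "hi (2 * int N + 0) (qv ^ N * c)" by (rule hi_mult[OF hi_qv_pow assms])
    then have "hi (0 + 2 * int N) (poch_tr N c * (qv ^ N * c))"
      by (intro hi_mult hi_poch assms) simp
    then show ?thesis by simp
  qed
  ultimately show ?thesis by (simp add: eqv_def hi_minus)
qed

lemma IA:
  assumes "hi a c" "1 \<le> a" "1 \<le> N"
  shows "eqv (int N) (ipoch_tr N (qv * c)) ((1 - c) * ipoch_tr N c)"
proof -
  have c0: "hi 0 c" using assms hi_mono by auto
  have e1: "(1 - c) * ipoch_tr N c * gs N (qv ^ N * c) = (1 - c ^ N) * ipoch_tr N (qv * c)"
  proof -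
    have "(1 - c) * ipoch_tr N c * gs N (qv ^ N * c) = (1 - c) * (ipoch_tr N c * gs N (qv ^ N * c))"
      by (simp add: mult.assoc)
    also have "\<dots> = ((1 - c) * gs N c) * ipoch_tr N (qv * c)" by (simp add: G2 mult.assoc)
    also have "\<dots> = (1 - c ^ N) * ipoch_tr N (qv * c)" by (simp add: G3)
    finally show ?thesis .
  qed
  have "eqv (int N) (ipoch_tr N (qv * c)) ((1 - c ^ N) * ipoch_tr N (qv * c))"
  proof -
    have "hi (int N * a + 0) (c ^ N * ipoch_tr N (qv * c))"
      by (rule hi_mult[OF hi_power[OF assms(1)] hi_ipoch[OF hi_qvc[OF c0]]])
    then have "hi (int N) (c ^ N * ipoch_tr N (qv * c))"
      by (rule hi_mono) (use assms in \<open>simp add: mult_le_cancel_left1\<close>)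
    then show ?thesis by (simp add: eqv_def algebra_simps)
  qed
  moreover have "eqv (int N) ((1 - c) * ipoch_tr N c * gs N (qv ^ N * c)) ((1 - c) * ipoch_tr N c * 1)"
  proof (rule eqv_mult[OF eqv_refl])
    have "hi (2 * int N + a) (qv ^ N * c)" by (rule hi_mult[OF hi_qv_pow assms(1)])
    then show "eqv (int N) (gs N (qv ^ N * c)) 1"
      by (intro eqv_mono[OF W2]) (use assms in auto)
    show "hi 0 ((1 - c) * ipoch_tr N c)"
      using hi_mult[OF hi_diff[OF hi_one c0] hi_ipoch[OF c0]] by simp
  qed (simp add: hi_one)
  ultimately show ?thesis using e1 eqv_trans by (simp only: mult_1_right)
qed

lemma hi_vpow: "hi d (vpow v e) \<longleftrightarrow> d \<le> (if v = T then e else if v = Z then 3 * e else 0)"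
  by (cases v) (simp_all add: vpow_def hi_mon wt_def lookup_single)

lemma hi_vmul: "hi a P \<Longrightarrow> hi (a + (if v = T then e else if v = Z then 3 * e else 0)) (P * vpow v e)"
  by (rule hi_mult) (simp_all add: hi_vpow)

lemma hi_vmul': "hi a P \<Longrightarrow> d \<le> a + (if v = T then e else if v = Z then 3 * e else 0) \<Longrightarrow> hi d (P * vpow v e)"
  using hi_vmul hi_mono by blast

lemma hi_vpow': "d \<le> (if v = T then e else if v = Z then 3 * e else 0) \<Longrightarrow> hi d (vpow v e)"
  by (simp add: hi_vpow)

lemma PS:
  assumes "hi 0 c" "N \<le> M"
  shows "eqv (2 * int N) (poch_tr M c) (poch_tr N c)"
proof -
  have "poch_tr M c = poch_tr N c * (\<Prod>k\<in>{N..<M}. 1 - c * qv ^ k)"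
    unfolding poch_tr_def using assms(2)
    by (simp add: atLeast0LessThan[symmetric] prod.atLeastLessThan_concat)
  moreover have "eqv (2 * int N) (poch_tr N c * (\<Prod>k\<in>{N..<M}. 1 - c * qv ^ k)) (poch_tr N c * (\<Prod>k\<in>{N..<M}. 1))"
  proof (rule eqv_mult[OF eqv_refl eqv_prod])
    fix k assume k: "k \<in> {N..<M}"
    have "hi (0 + 2 * int k) (c * qv ^ k)" by (rule hi_mult[OF assms(1) hi_qv_pow])
    then have "hi (2 * int N) (c * qv ^ k)" by (rule hi_mono) (use k in auto)
    then show "eqv (2 * int N) (1 - c * qv ^ k) 1" by (simp add: eqv_def hi_minus)
    show "hi 0 (1 - c * qv ^ k)"
      using hi_mult[OF assms(1) hi_qv_pow, of k] by (intro hi_diff hi_one) (auto elim: hi_mono)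
  qed (auto simp: hi_one hi_poch assms hi_prod0)
  ultimately show ?thesis by simp
qed

lemma IS:
  assumes "hi 1 c" "N \<le> M"
  shows "eqv (int N) (ipoch_tr M c) (ipoch_tr N c)"
proof -
  have c0: "hi 0 c" using assms(1) hi_mono by fastforce
  have hk: "hi (1 + 2 * int k) (c * qv ^ k)" for k by (rule hi_mult[OF assms(1) hi_qv_pow])
  have "ipoch_tr N c = (\<Prod>k<M. if k < N then gs N (c * qv ^ k) else 1)"
    unfolding ipoch_gs using assms(2)
    by (intro prod.mono_neutral_cong_left) auto
  moreover have "eqv (int N) (\<Prod>k<M. gs M (c * qv ^ k)) (\<Prod>k<M. if k < N then gs N (c * qv ^ k) else 1)"
  proof (rule eqv_prod)
    fix k assume k: "k \<in> {..<M}"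
    have ck0: "hi 0 (c * qv ^ k)" using hk[of k] hi_mono by fastforce
    show "hi 0 (gs M (c * qv ^ k))" by (rule hi_gs[OF ck0])
    show "hi 0 (if k < N then gs N (c * qv ^ k) else 1)" using hi_gs[OF ck0] hi_one by auto
    show "eqv (int N) (gs M (c * qv ^ k)) (if k < N then gs N (c * qv ^ k) else 1)"
    proof (cases "k < N")
      case True
      have "gs M (c * qv ^ k) = gs N (c * qv ^ k) + (\<Sum>m\<in>{N..<M}. (c * qv ^ k) ^ m)"
        unfolding gs_def using assms(2)
        by (simp add: atLeast0LessThan[symmetric] sum.atLeastLessThan_concat)
      moreover have "hi (int N) (\<Sum>m\<in>{N..<M}. (c * qv ^ k) ^ m)"
      proof (rule hi_sum)
        fix m assume m: "m \<in> {N..<M}"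
        have "hi (int m * (1 + 2 * int k)) ((c * qv ^ k) ^ m)" by (rule hi_power[OF hk])
        moreover have "int N \<le> int m * (1 + 2 * int k)"
        proof -
          have "int N \<le> int m" using m by auto
          also have "\<dots> \<le> int m * (1 + 2 * int k)" by (simp add: mult_le_cancel_left1)
          finally show ?thesis .
        qed
        ultimately show "hi (int N) ((c * qv ^ k) ^ m)" by (rule hi_mono)
      qed
      ultimately show ?thesis using True by (simp add: eqv_def)
    next
      case False
      then have "eqv (1 + 2 * int k) (gs M (c * qv ^ k)) 1"
        using k by (intro W2[OF hk]) auto
      then show ?thesis using False by (simp) (erule eqv_mono, auto)
    qed
  qed simp
  ultimately show ?thesis by (simp add: ipoch_gs)
qed

lemma hi_xx_diff: "hi 0 (xx i - xx j)"
  by (intro hi_diff hi_vpow') simp_all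

lemma hi_Xk: "hi 0 (\<Prod>i\<in>I. vpow (X i) e)"
  by (intro hi_prod0 hi_vpow') simp

lemma hi_V: "hi 0 (\<Prod>(i,j)\<in>S. xx i - xx j)"
  by (intro hi_prod0) (auto simp: hi_xx_diff)

lemma hi_arg1: "hi 0 (qv * xx i * xinv j)"
  by (simp add: vpow_def mon_mult hi_mon wt_def lookup_add lookup_single)
lemma hi_arg2: "hi 1 (zv * xx i * xinv j)"
  by (simp add: vpow_def mon_mult hi_mon wt_def lookup_add lookup_single)
lemma hi_arg3: "hi 0 (tv * xx i * yv)"
  by (simp add: vpow_def mon_mult hi_mon wt_def lookup_add lookup_single)
lemma hi_arg4: "hi 1 (tv * xx i * yv * zv)"
  by (simp add: vpow_def mon_mult hi_mon wt_def lookup_add lookup_single)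

definition PPf :: "nat \<Rightarrow> nat \<times> nat \<Rightarrow> lpoly" where
  "PPf N p = poch_tr N (qv * xx (fst p) * xinv (snd p)) * ipoch_tr N (zv * xx (fst p) * xinv (snd p))"
definition YYf :: "nat \<Rightarrow> nat \<Rightarrow> lpoly" where
  "YYf N i = poch_tr N (tv * xx i * yv) * ipoch_tr N (tv * xx i * yv * zv)"

abbreviation "Ppairs (n::nat) \<equiv> {(i,j). i \<in> {1..n} \<and> j \<in> {1..n} \<and> i \<noteq> j}"
abbreviation "Vpairs (n::nat) \<equiv> {(i,j). 1 \<le> i \<and> i < j \<and> j \<le> n}"

lemma finite_Ppairs: "finite (Ppairs n)"
  by (rule finite_subset[of _ "{1..n} \<times> {1..n}"]) auto
lemma finite_Vpairs: "finite (Vpairs n)"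
  by (rule finite_subset[of _ "{1..n} \<times> {1..n}"]) auto

lemma h_tr_split: "h_tr n k N = (\<Prod>i\<in>{1..n}. vpow (X i) (-k)) * (\<Prod>(i,j)\<in>Vpairs n. xx i - xx j)
   * (\<Prod>p\<in>Ppairs n. PPf N p) * (\<Prod>i\<in>{1..n}. YYf N i)"
  unfolding h_tr_def PPf_def YYf_def by (simp add: case_prod_beta)

lemma hi_PPf: "hi 0 (PPf N p)"
  unfolding PPf_def using hi_mult[OF hi_poch[OF hi_arg1] hi_ipoch[OF hi_mono[OF hi_arg2]]] by simp
lemma hi_YYf: "hi 0 (YYf N p)"
  unfolding YYf_def using hi_mult[OF hi_poch[OF hi_arg3] hi_ipoch[OF hi_mono[OF hi_arg4]]] by simp

lemma h_tr_stab:
  assumes "N \<le> M"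
  shows "eqv (int N) (h_tr n k M) (h_tr n k N)"
proof -
  have pp: "eqv (int N) (\<Prod>p\<in>Ppairs n. PPf M p) (\<Prod>p\<in>Ppairs n. PPf N p)"
  proof (rule eqv_prod[OF finite_Ppairs])
    fix p
    show "eqv (int N) (PPf M p) (PPf N p)"
      unfolding PPf_def
      by (rule eqv_mult[OF eqv_mono[OF PS[OF hi_arg1 assms]] IS[OF hi_arg2 assms] hi_poch[OF hi_arg1] hi_ipoch[OF hi_mono[OF hi_arg2]]]) auto
  qed (simp_all add: hi_PPf)
  have yy: "eqv (int N) (\<Prod>i\<in>{1..n}. YYf M i) (\<Prod>i\<in>{1..n}. YYf N i)"
  proof (rule eqv_prod)
    fix i
    show "eqv (int N) (YYf M i) (YYf N i)"
      unfolding YYf_def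
      by (rule eqv_mult[OF eqv_mono[OF PS[OF hi_arg3 assms]] IS[OF hi_arg4 assms] hi_poch[OF hi_arg3] hi_ipoch[OF hi_mono[OF hi_arg4]]]) auto
  qed (simp_all add: hi_YYf)
  have c: "hi 0 ((\<Prod>i\<in>{1..n}. vpow (X i) (-k)) * (\<Prod>(i,j)\<in>Vpairs n. xx i - xx j))"
    using hi_mult[OF hi_Xk hi_V] by simp
  have p1: "hi 0 (prod (PPf N) (Ppairs n))" by (rule hi_prod0) (rule hi_PPf)
  have p2: "hi 0 (prod (YYf N) {1..n})" by (rule hi_prod0) (rule hi_YYf)
  have p3: "hi 0 (prod (PPf M) (Ppairs n))" by (rule hi_prod0) (rule hi_PPf)
  have p4: "hi 0 ((\<Prod>i\<in>{1..n}. vpow (X i) (-k)) * (\<Prod>(i,j)\<in>Vpairs n. xx i - xx j) * prod (PPf M) (Ppairs n))"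
    using hi_mult[OF c p3] by simp
  show ?thesis unfolding h_tr_split
    by (rule eqv_mult[OF eqv_mult[OF eqv_refl pp c p1] yy p4 p2])
qed

lemma h_eq:
  assumes "nat (wt \<nu>) + 1 \<le> N"
  shows "h n k \<nu> = Poly_Mapping.lookup (h_tr n k N) \<nu>"
proof -
  define N0 where "N0 = nat (wt \<nu>) + 1"
  have st: "Poly_Mapping.lookup (h_tr n k M) \<nu> = Poly_Mapping.lookup (h_tr n k N0) \<nu>" if "N0 \<le> M" for M
    by (rule eqv_lookup[OF h_tr_stab[OF that]]) (simp add: N0_def)
  have ev: "eventually (\<lambda>M. Poly_Mapping.lookup (h_tr n k M) \<nu> = Poly_Mapping.lookup (h_tr n k N0) \<nu>) sequentially"
    unfolding eventually_sequentially using st by blast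
  have "h n k \<nu> = Poly_Mapping.lookup (h_tr n k N0) \<nu>"
    unfolding h_def
  proof (rule the_equality[where P="\<lambda>c. eventually (\<lambda>M. Poly_Mapping.lookup (h_tr n k M) \<nu> = c) sequentially", OF ev])
    fix c assume "eventually (\<lambda>M. Poly_Mapping.lookup (h_tr n k M) \<nu> = c) sequentially"
    from eventually_conj[OF this ev] obtain M where
      "Poly_Mapping.lookup (h_tr n k M) \<nu> = c" "Poly_Mapping.lookup (h_tr n k M) \<nu> = Poly_Mapping.lookup (h_tr n k N0) \<nu>"
      unfolding eventually_sequentially by blast
    then show "c = Poly_Mapping.lookup (h_tr n k N0) \<nu>" by simp
  qed
  moreover have "N0 \<le> N" using assms by (simp add: N0_def)
  ultimately show ?thesis using st[of N] by simp
qed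

definition sg :: "nat \<Rightarrow> mono \<Rightarrow> mono" where
  "sg l \<nu> = \<nu> + Poly_Mapping.single T (2 * Poly_Mapping.lookup \<nu> (X l))"
definition sgi :: "nat \<Rightarrow> mono \<Rightarrow> mono" where
  "sgi l \<nu> = \<nu> - Poly_Mapping.single T (2 * Poly_Mapping.lookup \<nu> (X l))"

lemma sg_add: "sg l (a + b) = sg l a + sg l b"
  by (simp add: sg_def lookup_add single_add algebra_simps)

interpretation sgm: addmap "sg l" by standard (rule sg_add)

lemma sgi_sg: "sgi l (sg l x) = x"
  by (simp add: sg_def sgi_def lookup_add lookup_single)
lemma sg_sgi: "sg l (sgi l x) = x"
  by (simp add: sg_def sgi_def lookup_minus lookup_single)

lemma sgi_add: "sgi l (a + b) = sgi l a + sgi l b"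
  by (simp add: sgi_def lookup_add single_add algebra_simps)
lemma sgi_diff: "sgi l (a - b) = sgi l a - sgi l b"
  by (simp add: sgi_def lookup_minus single_diff algebra_simps)

lemma lookup_pm_sg: "Poly_Mapping.lookup (pm (sg l) P) \<mu> = Poly_Mapping.lookup P (sgi l \<mu>)"
  by (rule lookup_pm) (simp_all add: sgi_sg sg_sgi)

lemma pm_sg_vpow:
  "pm (sg l) (vpow v e) = (if v = X l then vpow (X l) e * vpow T (2 * e) else vpow v e)"
  by (cases v) (auto simp: vpow_def pm_mon sg_def lookup_single mon_mult)

abbreviation qinv :: lpoly where "qinv \<equiv> vpow T (-2)"

lemma qv_qinv: "qv * qinv = 1"
  by (simp add: vpow_mult vpow_zero)

lemma xx_xinv: "xx i * xinv i = 1"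
  by (simp add: vpow_mult vpow_zero)


lemma pm_sg_qv: "pm (sg l) qv = qv"
  by (simp add: pm_sg_vpow)

lemma pm_sg_poch: "pm (sg l) (poch_tr N c) = poch_tr N (pm (sg l) c)"
  unfolding poch_tr_def
  by (simp add: sgm.pm_prod sgm.pm_mult pm_diff sgm.pm_one sgm.pm_power pm_sg_qv)

lemma pm_sg_ipoch: "pm (sg l) (ipoch_tr N c) = ipoch_tr N (pm (sg l) c)"
  unfolding ipoch_tr_def
  by (simp add: sgm.pm_prod sgm.pm_mult sgm.pm_sum sgm.pm_power pm_sg_qv)

definition aP :: "nat \<Rightarrow> nat \<times> nat \<Rightarrow> lpoly" where
  "aP l p = (if fst p = l then 1 - qv * xx l * xinv (snd p)
             else if snd p = l then 1 - zv * xx (fst p) * xinv l * qinv else 1)"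
definition bP :: "nat \<Rightarrow> nat \<times> nat \<Rightarrow> lpoly" where
  "bP l p = (if fst p = l then 1 - zv * xx l * xinv (snd p)
             else if snd p = l then 1 - xx (fst p) * xinv l else 1)"

lemmas hinorm = vpow_def mon_mult hi_mon wt_def lookup_add lookup_single

lemma PP_pair:
  assumes "1 \<le> N" "i \<noteq> j"
  shows "eqv (int N) (pm (sg l) (PPf N (i,j)) * aP l (i,j)) (PPf N (i,j) * bP l (i,j))
    \<and> hi 0 (pm (sg l) (PPf N (i,j)) * aP l (i,j)) \<and> hi 0 (PPf N (i,j) * bP l (i,j))"
proof (cases "i = l")
  case True
  define a where "a = qv * xx l * xinv j"
  define b where "b = zv * xx l * xinv j"
  have jl: "j \<noteq> l" using assms True by auto
  have ha: "hi 0 a" unfolding a_def by (simp add: hinorm)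
  have hb: "hi 1 b" unfolding b_def by (simp add: hinorm)
  have hb0: "hi 0 b" unfolding b_def by (simp add: hinorm)
  have s1: "pm (sg l) a = qv * a" unfolding a_def
    using jl by (simp add: sgm.pm_mult pm_sg_vpow ac_simps)
  have s2: "pm (sg l) b = qv * b" unfolding b_def
    using jl by (simp add: sgm.pm_mult pm_sg_vpow ac_simps)
  have F: "PPf N (i,j) = poch_tr N a * ipoch_tr N b"
    by (simp add: PPf_def True a_def b_def)
  have sF: "pm (sg l) (PPf N (i,j)) = poch_tr N (qv * a) * ipoch_tr N (qv * b)"
    by (simp add: F sgm.pm_mult pm_sg_poch pm_sg_ipoch s1 s2)
  have aa: "aP l (i,j) = 1 - a" by (simp add: aP_def True a_def)
  have bb: "bP l (i,j) = 1 - b" by (simp add: bP_def True b_def jl b_def)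
  have h1: "hi 0 ((1 - a) * poch_tr N (qv * a))"
    using hi_mult[OF hi_diff[OF hi_one ha] hi_poch[OF hi_qvc[OF ha]]] by simp
  have h2: "hi 0 ((1 - b) * ipoch_tr N b)"
    using hi_mult[OF hi_diff[OF hi_one hb0] hi_ipoch[OF hb0]] by simp
  have e: "eqv (int N) ((1 - a) * poch_tr N (qv * a) * ipoch_tr N (qv * b)) (poch_tr N a * ((1 - b) * ipoch_tr N b))"
    by (rule eqv_mult[OF eqv_mono[OF PA[OF ha]] IA[OF hb order_refl assms(1)] h1 h2]) simp
  have h3: "hi 0 ((1 - a) * poch_tr N (qv * a) * ipoch_tr N (qv * b))"
    using hi_mult[OF h1 hi_ipoch[OF hi_qvc[OF hb0]]] by simp
  have h4: "hi 0 (poch_tr N a * ((1 - b) * ipoch_tr N b))"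
    using hi_mult[OF hi_poch[OF ha] h2] by simp
  show ?thesis using e h3 h4 unfolding sF by (simp add: F aa bb ac_simps)
next
  case False
  show ?thesis
  proof (cases "j = l")
    case True
    define c where "c = xx i * xinv l"
    define e where "e = zv * xx i * xinv l * qinv"
    have hc: "hi 0 c" unfolding c_def by (simp add: hinorm)
    have he: "hi 1 e" unfolding e_def by (simp add: hinorm)
    have he0: "hi 0 e" unfolding e_def by (simp add: hinorm)
    have q1: "qv * xx i * xinv l = qv * c" by (simp add: c_def ac_simps)
    have q2: "zv * xx i * xinv l = qv * e"
    proof -
      have "qv * e = zv * xx i * xinv l * (qv * qinv)" by (simp add: e_def ac_simps)
      then show ?thesis by (simp add: qv_qinv)
    qed
    have s1: "pm (sg l) (qv * c) = c"
    proof -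
      have "pm (sg l) (qv * c) = xx i * xinv l * (qv * qinv)"
        using False by (simp add: c_def sgm.pm_mult pm_sg_vpow ac_simps)
      then show ?thesis by (simp add: qv_qinv c_def)
    qed
    have s2: "pm (sg l) (qv * e) = e"
    proof -
      have "pm (sg l) (qv * e) = pm (sg l) (zv * xx i * xinv l)" by (simp add: q2)
      also have "\<dots> = e"
        using False by (simp add: e_def sgm.pm_mult pm_sg_vpow ac_simps)
      finally show ?thesis .
    qed
    have F: "PPf N (i,j) = poch_tr N (qv * c) * ipoch_tr N (qv * e)"
      by (simp add: PPf_def True q1 q2)
    have sF: "pm (sg l) (PPf N (i,j)) = poch_tr N c * ipoch_tr N e"
      by (simp only: F sgm.pm_mult[where P="poch_tr N (qv * c)"] pm_sg_poch pm_sg_ipoch s1 s2)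
    have aa: "aP l (i,j) = 1 - e" using False by (simp add: aP_def True e_def)
    have bb: "bP l (i,j) = 1 - c" using False by (simp add: bP_def True c_def)
    have h1: "hi 0 ((1 - c) * poch_tr N (qv * c))"
      using hi_mult[OF hi_diff[OF hi_one hc] hi_poch[OF hi_qvc[OF hc]]] by simp
    have h2: "hi 0 ((1 - e) * ipoch_tr N e)"
      using hi_mult[OF hi_diff[OF hi_one he0] hi_ipoch[OF he0]] by simp
    have ee: "eqv (int N) (poch_tr N c * ((1 - e) * ipoch_tr N e)) ((1 - c) * poch_tr N (qv * c) * ipoch_tr N (qv * e))"
      by (rule eqv_mult[OF eqv_sym[OF eqv_mono[OF PA[OF hc]]] eqv_sym[OF IA[OF he order_refl assms(1)]] hi_poch[OF hc] hi_ipoch[OF hi_qvc[OF he0]]]) simp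
    have h3: "hi 0 (poch_tr N c * ((1 - e) * ipoch_tr N e))"
      using hi_mult[OF hi_poch[OF hc] h2] by simp
    have h4: "hi 0 ((1 - c) * poch_tr N (qv * c) * ipoch_tr N (qv * e))"
      using hi_mult[OF h1 hi_ipoch[OF hi_qvc[OF he0]]] by simp
    show ?thesis using ee h3 h4 unfolding sF by (simp add: F aa bb ac_simps)
  next
    case jl: False
    have sF: "pm (sg l) (PPf N (i,j)) = PPf N (i,j)"
      using False jl by (simp add: PPf_def sgm.pm_mult pm_sg_poch pm_sg_ipoch pm_sg_vpow)
    have aa: "aP l (i,j) = 1" using False jl by (simp add: aP_def)
    have bb: "bP l (i,j) = 1" using False jl by (simp add: bP_def)
    show ?thesis unfolding sF aa bb by (simp add: eqv_refl hi_PPf)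
  qed
qed

lemma I1: fixes x y q l :: "'a::comm_ring_1" assumes "x * y = 1"
  shows "- x * (1 - q * l * y) = q * l - x"
proof -
  have "- x * (1 - q * l * y) = (q * l - x) + q * l * (x * y - 1)" by (simp add: algebra_simps)
  then show ?thesis using assms by simp
qed

lemma I2: fixes x y q l :: "'a::comm_ring_1" assumes "x * y = 1"
  shows "x * (1 - q * l * y) = x - q * l"
proof -
  have "x * (1 - q * l * y) = (x - q * l) - q * l * (x * y - 1)" by (simp add: algebra_simps)
  then show ?thesis using assms by simp
qed

lemma I3: fixes xj yj xl yl z :: "'a::comm_ring_1" assumes "xj * yj = 1" "xl * yl = 1"
  shows "- xj * ((1 - z * xl * yj) * (1 - xj * yl)) = (xl - xj) * (z - xj * yl)"
proof -
  have "- xj * ((1 - z * xl * yj) * (1 - xj * yl)) = (xl - xj) * (z - xj * yl)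
     + z * xl * (xj * yj - 1) - z * xj * ((xj * yj) * (xl * yl) - 1) + xj * (xl * yl - 1)"
    by (simp add: algebra_simps)
  then show ?thesis using assms by simp
qed

lemma I4: fixes xi yi xl yl z :: "'a::comm_ring_1" assumes "xi * yi = 1" "xl * yl = 1"
  shows "xi * ((1 - z * xl * yi) * (1 - xi * yl)) = (xi - xl) * (z - xi * yl)"
proof -
  have "xi * ((1 - z * xl * yi) * (1 - xi * yl)) = (xi - xl) * (z - xi * yl)
     - xi * (xl * yl - 1) - z * xl * (xi * yi - 1) + z * xi * ((xi * yi) * (xl * yl) - 1)"
    by (simp add: algebra_simps)
  then show ?thesis using assms by simp
qed


definition aY :: "nat \<Rightarrow> nat \<Rightarrow> lpoly" where
  "aY l i = (if i = l then 1 - tv * xx l * yv else 1)"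
definition bY :: "nat \<Rightarrow> nat \<Rightarrow> lpoly" where
  "bY l i = (if i = l then 1 - tv * xx l * yv * zv else 1)"

lemma YY_one:
  assumes "1 \<le> N"
  shows "eqv (int N) (pm (sg l) (YYf N i) * aY l i) (YYf N i * bY l i)
    \<and> hi 0 (pm (sg l) (YYf N i) * aY l i) \<and> hi 0 (YYf N i * bY l i)"
proof (cases "i = l")
  case True
  define c where "c = tv * xx l * yv"
  define d where "d = tv * xx l * yv * zv"
  have hc: "hi 0 c" unfolding c_def by (simp add: hinorm)
  have hd: "hi 1 d" unfolding d_def by (simp add: hinorm)
  have hd0: "hi 0 d" unfolding d_def by (simp add: hinorm)
  have s1: "pm (sg l) c = qv * c" unfolding c_def
    by (simp add: sgm.pm_mult pm_sg_vpow ac_simps)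
  have s2: "pm (sg l) d = qv * d" unfolding d_def
    by (simp add: sgm.pm_mult pm_sg_vpow ac_simps)
  have F: "YYf N i = poch_tr N c * ipoch_tr N d"
    by (simp add: YYf_def True c_def d_def)
  have sF: "pm (sg l) (YYf N i) = poch_tr N (qv * c) * ipoch_tr N (qv * d)"
    by (simp only: F sgm.pm_mult[where P="poch_tr N c"] pm_sg_poch pm_sg_ipoch s1 s2)
  have aa: "aY l i = 1 - c" by (simp add: aY_def True c_def)
  have bb: "bY l i = 1 - d" by (simp add: bY_def True d_def)
  have h1: "hi 0 ((1 - c) * poch_tr N (qv * c))"
    using hi_mult[OF hi_diff[OF hi_one hc] hi_poch[OF hi_qvc[OF hc]]] by simp
  have h2: "hi 0 ((1 - d) * ipoch_tr N d)"
    using hi_mult[OF hi_diff[OF hi_one hd0] hi_ipoch[OF hd0]] by simp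
  have e: "eqv (int N) ((1 - c) * poch_tr N (qv * c) * ipoch_tr N (qv * d)) (poch_tr N c * ((1 - d) * ipoch_tr N d))"
    by (rule eqv_mult[OF eqv_mono[OF PA[OF hc]] IA[OF hd order_refl assms(1)] h1 h2]) simp
  have h3: "hi 0 ((1 - c) * poch_tr N (qv * c) * ipoch_tr N (qv * d))"
    using hi_mult[OF h1 hi_ipoch[OF hi_qvc[OF hd0]]] by simp
  have h4: "hi 0 (poch_tr N c * ((1 - d) * ipoch_tr N d))"
    using hi_mult[OF hi_poch[OF hc] h2] by simp
  show ?thesis using e h3 h4 unfolding sF by (simp add: F aa bb ac_simps)
next
  case False
  have sF: "pm (sg l) (YYf N i) = YYf N i"
    using False by (simp add: YYf_def sgm.pm_mult pm_sg_poch pm_sg_ipoch pm_sg_vpow)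
  show ?thesis unfolding sF using False by (simp add: aY_def bY_def eqv_refl hi_YYf)
qed

lemma prod_Ppairs:
  assumes "l \<in> {1..n}"
  shows "(\<Prod>p\<in>Ppairs n. if fst p = l then f (snd p) else if snd p = l then g (fst p) else 1)
       = (\<Prod>j\<in>{1..n}-{l}. f j) * (\<Prod>i\<in>{1..n}-{l}. g i)"
proof -
  have "(\<Prod>p\<in>Ppairs n. if fst p = l then f (snd p) else if snd p = l then g (fst p) else 1)
      = (\<Prod>p\<in>Ppairs n. (if fst p = l then f (snd p) else 1) * (if snd p = l then g (fst p) else 1))"
    by (rule prod.cong) auto
  also have "\<dots> = (\<Prod>p\<in>Ppairs n. if fst p = l then f (snd p) else 1) * (\<Prod>p\<in>Ppairs n. if snd p = l then g (fst p) else 1)"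
    by (rule prod.distrib)
  also have "(\<Prod>p\<in>Ppairs n. if fst p = l then f (snd p) else 1) = (\<Prod>p\<in>{p\<in>Ppairs n. fst p = l}. f (snd p))"
    by (rule prod.inter_filter[symmetric]) (rule finite_Ppairs)
  also have "{p\<in>Ppairs n. fst p = l} = (\<lambda>j. (l, j)) ` ({1..n}-{l})" using assms by auto
  also have "(\<Prod>p\<in>(\<lambda>j. (l, j)) ` ({1..n}-{l}). f (snd p)) = (\<Prod>j\<in>{1..n}-{l}. f j)"
    by (subst prod.reindex) (auto simp: inj_on_def)
  also have "(\<Prod>p\<in>Ppairs n. if snd p = l then g (fst p) else 1) = (\<Prod>p\<in>{p\<in>Ppairs n. snd p = l}. g (fst p))"
    by (rule prod.inter_filter[symmetric]) (rule finite_Ppairs)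
  also have "{p\<in>Ppairs n. snd p = l} = (\<lambda>i. (i, l)) ` ({1..n}-{l})" using assms by auto
  also have "(\<Prod>p\<in>(\<lambda>i. (i, l)) ` ({1..n}-{l}). g (fst p)) = (\<Prod>i\<in>{1..n}-{l}. g i)"
    by (subst prod.reindex) (auto simp: inj_on_def)
  finally show ?thesis .
qed

lemma prod_Vpairs:
  assumes "l \<in> {1..n}"
  shows "(\<Prod>p\<in>Vpairs n. if fst p = l then f (snd p) else if snd p = l then f (fst p) else 1)
       = (\<Prod>j\<in>{1..n}-{l}. f j)"
proof -
  have "(\<Prod>p\<in>Vpairs n. if fst p = l then f (snd p) else if snd p = l then f (fst p) else 1)
      = (\<Prod>p\<in>Vpairs n. (if fst p = l then f (snd p) else 1) * (if snd p = l then f (fst p) else 1))"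
    by (rule prod.cong) auto
  also have "\<dots> = (\<Prod>p\<in>Vpairs n. if fst p = l then f (snd p) else 1) * (\<Prod>p\<in>Vpairs n. if snd p = l then f (fst p) else 1)"
    by (rule prod.distrib)
  also have "(\<Prod>p\<in>Vpairs n. if fst p = l then f (snd p) else 1) = (\<Prod>p\<in>{p\<in>Vpairs n. fst p = l}. f (snd p))"
    by (rule prod.inter_filter[symmetric]) (rule finite_Vpairs)
  also have "{p\<in>Vpairs n. fst p = l} = (\<lambda>j. (l, j)) ` {l<..n}" using assms by auto
  also have "(\<Prod>p\<in>(\<lambda>j. (l, j)) ` {l<..n}. f (snd p)) = (\<Prod>j\<in>{l<..n}. f j)"
    by (subst prod.reindex) (auto simp: inj_on_def)
  also have "(\<Prod>p\<in>Vpairs n. if snd p = l then f (fst p) else 1) = (\<Prod>p\<in>{p\<in>Vpairs n. snd p = l}. f (fst p))"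
    by (rule prod.inter_filter[symmetric]) (rule finite_Vpairs)
  also have "{p\<in>Vpairs n. snd p = l} = (\<lambda>i. (i, l)) ` {1..<l}" using assms by auto
  also have "(\<Prod>p\<in>(\<lambda>i. (i, l)) ` {1..<l}. f (fst p)) = (\<Prod>i\<in>{1..<l}. f i)"
    by (subst prod.reindex) (auto simp: inj_on_def)
  also have "(\<Prod>j\<in>{l<..n}. f j) * (\<Prod>i\<in>{1..<l}. f i) = (\<Prod>j\<in>{1..<l} \<union> {l<..n}. f j)"
    by (subst prod.union_disjoint) (auto simp: mult.commute)
  also have "{1..<l} \<union> {l<..n} = {1..n} - {l}" using assms by auto
  finally show ?thesis .
qed

definition wfac :: "nat \<Rightarrow> nat \<times> nat \<Rightarrow> lpoly" where
  "wfac l p = (if fst p = l then - xx (snd p) else if snd p = l then xx (fst p) else xx (fst p) - xx (snd p))"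

lemma V_pair1:
  assumes "fst p < snd p"
  shows "pm (sg l) (xx (fst p) - xx (snd p)) = wfac l p *
     (if fst p = l then 1 - qv * xx l * xinv (snd p) else if snd p = l then 1 - qv * xx l * xinv (fst p) else 1)"
proof -
  obtain i j where p: "p = (i, j)" by (cases p)
  show ?thesis
  proof (cases "i = l")
    case True
    then have "j \<noteq> l" using assms p by auto
    then have "pm (sg l) (xx (fst p) - xx (snd p)) = qv * xx l - xx j"
      using True p by (simp add: pm_diff pm_sg_vpow ac_simps)
    also have "\<dots> = - xx j * (1 - qv * xx l * xinv j)" by (rule I1[OF xx_xinv, symmetric])
    finally show ?thesis using True p \<open>j \<noteq> l\<close> by (simp add: wfac_def)
  next
    case False
    show ?thesis
    proof (cases "j = l")
      case True
      then have "pm (sg l) (xx (fst p) - xx (snd p)) = xx i - qv * xx l"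
        using False p by (simp add: pm_diff pm_sg_vpow ac_simps)
      also have "\<dots> = xx i * (1 - qv * xx l * xinv i)" by (rule I2[OF xx_xinv, symmetric])
      finally show ?thesis using True False p by (simp add: wfac_def)
    next
      case False2: False
      then show ?thesis using False p by (simp add: wfac_def pm_diff pm_sg_vpow)
    qed
  qed
qed

lemma V_pair2:
  assumes "fst p < snd p"
  shows "wfac l p * (if fst p = l then (1 - zv * xx l * xinv (snd p)) * (1 - xx (snd p) * xinv l)
                   else if snd p = l then (1 - zv * xx l * xinv (fst p)) * (1 - xx (fst p) * xinv l) else 1)
       = (xx (fst p) - xx (snd p)) * (if fst p = l then zv - xx (snd p) * xinv l
                   else if snd p = l then zv - xx (fst p) * xinv l else 1)"
proof -
  obtain i j where p: "p = (i, j)" by (cases p)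
  show ?thesis
  proof (cases "i = l")
    case True
    then have "j \<noteq> l" using assms p by auto
    then show ?thesis using True p I3[OF xx_xinv[of j] xx_xinv[of l], of zv]
      by (simp add: wfac_def ac_simps)
  next
    case False
    show ?thesis
    proof (cases "j = l")
      case True
      then show ?thesis using False p I4[OF xx_xinv[of i] xx_xinv[of l], of zv]
        by (simp add: wfac_def ac_simps)
    next
      case False2: False
      then show ?thesis using False p by (simp add: wfac_def)
    qed
  qed
qed


abbreviation Xk :: "nat \<Rightarrow> int \<Rightarrow> lpoly" where
  "Xk n k \<equiv> (\<Prod>i\<in>{1..n}. vpow (X i) (-k))"
abbreviation Vd :: "nat \<Rightarrow> lpoly" where
  "Vd n \<equiv> (\<Prod>(i,j)\<in>Vpairs n. xx i - xx j)"

lemma pm_Xk: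
  assumes "l \<in> {1..n}"
  shows "pm (sg l) (Xk n k) = Xk n k * vpow T (-2 * k)"
proof -
  have "pm (sg l) (Xk n k) = (\<Prod>i\<in>{1..n}. vpow (X i) (-k) * (if i = l then vpow T (-2 * k) else 1))"
    unfolding sgm.pm_prod by (rule prod.cong) (auto simp: pm_sg_vpow)
  also have "\<dots> = Xk n k * vpow T (-2 * k)"
    using assms by (simp add: prod.distrib)
  finally show ?thesis .
qed

lemma Vd_fst_snd: "Vd n = (\<Prod>p\<in>Vpairs n. xx (fst p) - xx (snd p))"
  by (simp add: case_prod_beta)

lemma pm_Vd:
  assumes "l \<in> {1..n}"
  shows "pm (sg l) (Vd n) = (\<Prod>p\<in>Vpairs n. wfac l p) * (\<Prod>j\<in>{1..n}-{l}. 1 - qv * xx l * xinv j)"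
proof -
  have "pm (sg l) (Vd n) = (\<Prod>p\<in>Vpairs n. wfac l p *
     (if fst p = l then 1 - qv * xx l * xinv (snd p) else if snd p = l then 1 - qv * xx l * xinv (fst p) else 1))"
    unfolding Vd_fst_snd sgm.pm_prod
  proof (rule prod.cong[OF refl])
    fix p assume "p \<in> Vpairs n"
    then show "pm (sg l) (xx (fst p) - xx (snd p)) = wfac l p *
     (if fst p = l then 1 - qv * xx l * xinv (snd p) else if snd p = l then 1 - qv * xx l * xinv (fst p) else 1)"
      by (intro V_pair1) auto
  qed
  also have "\<dots> = (\<Prod>p\<in>Vpairs n. wfac l p) * (\<Prod>j\<in>{1..n}-{l}. 1 - qv * xx l * xinv j)"
    unfolding prod.distrib prod_Vpairs[OF assms, of "\<lambda>j. 1 - qv * xx l * xinv j"] ..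
  finally show ?thesis .
qed

lemma W_Vd:
  assumes "l \<in> {1..n}"
  shows "(\<Prod>p\<in>Vpairs n. wfac l p) * ((\<Prod>j\<in>{1..n}-{l}. 1 - zv * xx l * xinv j) * (\<Prod>j\<in>{1..n}-{l}. 1 - xx j * xinv l))
       = Vd n * (\<Prod>j\<in>{1..n}-{l}. zv - xx j * xinv l)"
proof -
  have "(\<Prod>p\<in>Vpairs n. wfac l p) * ((\<Prod>j\<in>{1..n}-{l}. 1 - zv * xx l * xinv j) * (\<Prod>j\<in>{1..n}-{l}. 1 - xx j * xinv l))
      = (\<Prod>p\<in>Vpairs n. wfac l p) * (\<Prod>p\<in>Vpairs n. if fst p = l then (1 - zv * xx l * xinv (snd p)) * (1 - xx (snd p) * xinv l)
                   else if snd p = l then (1 - zv * xx l * xinv (fst p)) * (1 - xx (fst p) * xinv l) else 1)"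
    unfolding prod_Vpairs[OF assms, of "\<lambda>j. (1 - zv * xx l * xinv j) * (1 - xx j * xinv l)"] prod.distrib ..
  also have "\<dots> = (\<Prod>p\<in>Vpairs n. (xx (fst p) - xx (snd p)) * (if fst p = l then zv - xx (snd p) * xinv l
                   else if snd p = l then zv - xx (fst p) * xinv l else 1))"
    unfolding prod.distrib[symmetric]
  proof (rule prod.cong[OF refl])
    fix p assume "p \<in> Vpairs n"
    then show "wfac l p * (if fst p = l then (1 - zv * xx l * xinv (snd p)) * (1 - xx (snd p) * xinv l)
                   else if snd p = l then (1 - zv * xx l * xinv (fst p)) * (1 - xx (fst p) * xinv l) else 1)
       = (xx (fst p) - xx (snd p)) * (if fst p = l then zv - xx (snd p) * xinv l
                   else if snd p = l then zv - xx (fst p) * xinv l else 1)"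
      by (intro V_pair2) auto
  qed
  also have "\<dots> = Vd n * (\<Prod>j\<in>{1..n}-{l}. zv - xx j * xinv l)"
    unfolding prod.distrib prod_Vpairs[OF assms, of "\<lambda>j. zv - xx j * xinv l"] Vd_fst_snd ..
  finally show ?thesis .
qed

lemma hi_wfac: "hi 0 (wfac l p)"
  unfolding wfac_def by (auto intro!: hi_minus hi_diff hi_vpow')

definition Apol :: "nat \<Rightarrow> nat \<Rightarrow> lpoly" where
  "Apol n l = (1 - tv * xx l * yv) * (\<Prod>i\<in>{1..n}-{l}. 1 - zv * xx i * xinv l * qinv)"
definition Bpol :: "nat \<Rightarrow> nat \<Rightarrow> lpoly" where
  "Bpol n l = (1 - tv * xx l * yv * zv) * (\<Prod>i\<in>{1..n}-{l}. zv - xx i * xinv l)"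

lemma CONG:
  assumes "l \<in> {1..n}" "1 \<le> N"
  shows "eqv (int N - 2 * k) (pm (sg l) (h_tr n k N) * Apol n l) (vpow T (-2 * k) * h_tr n k N * Bpol n l)"
proof -
  let ?S = "{1..n}-{l}"
  let ?PP = "\<Prod>p\<in>Ppairs n. PPf N p"
  let ?YY = "\<Prod>i\<in>{1..n}. YYf N i"
  let ?W = "\<Prod>p\<in>Vpairs n. wfac l p"
  let ?K = "Xk n k * vpow T (-2 * k) * ?W"
  have eP: "eqv (int N) (\<Prod>p\<in>Ppairs n. pm (sg l) (PPf N p) * aP l p) (\<Prod>p\<in>Ppairs n. PPf N p * bP l p)"
    by (rule eqv_prod[OF finite_Ppairs]) (use PP_pair[OF assms(2)] in auto)
  have eY: "eqv (int N) (\<Prod>i\<in>{1..n}. pm (sg l) (YYf N i) * aY l i) (\<Prod>i\<in>{1..n}. YYf N i * bY l i)"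
    by (rule eqv_prod) (use YY_one[OF assms(2)] in auto)
  have hP1: "hi 0 (\<Prod>p\<in>Ppairs n. pm (sg l) (PPf N p) * aP l p)"
    by (rule hi_prod0) (use PP_pair[OF assms(2)] in auto)
  have hY2: "hi 0 (\<Prod>i\<in>{1..n}. YYf N i * bY l i)"
    by (rule hi_prod0) (use YY_one[OF assms(2)] in auto)
  have e2: "eqv (int N) ((\<Prod>p\<in>Ppairs n. pm (sg l) (PPf N p) * aP l p) * (\<Prod>i\<in>{1..n}. pm (sg l) (YYf N i) * aY l i))
                      ((\<Prod>p\<in>Ppairs n. PPf N p * bP l p) * (\<Prod>i\<in>{1..n}. YYf N i * bY l i))"
    by (rule eqv_mult[OF eP eY hP1 hY2])
  have hK: "hi (-2 * k) ?K"
  proof -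
    have "hi (0 + -2 * k) (Xk n k * vpow T (-2 * k))" by (rule hi_mult[OF hi_Xk]) (simp add: hi_vpow)
    then have "hi (-2 * k + 0) (Xk n k * vpow T (-2 * k) * ?W)" by (intro hi_mult hi_prod0 hi_wfac) simp
    then show ?thesis by simp
  qed
  note e3 = eqv_mult_left[OF hK e2]
  have aP_prod: "(\<Prod>p\<in>Ppairs n. aP l p) = (\<Prod>j\<in>?S. 1 - qv * xx l * xinv j) * (\<Prod>i\<in>?S. 1 - zv * xx i * xinv l * qinv)"
    unfolding aP_def by (rule prod_Ppairs[OF assms(1)])
  have bP_prod: "(\<Prod>p\<in>Ppairs n. bP l p) = (\<Prod>j\<in>?S. 1 - zv * xx l * xinv j) * (\<Prod>i\<in>?S. 1 - xx i * xinv l)"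
    unfolding bP_def by (rule prod_Ppairs[OF assms(1)])
  have aY_prod: "(\<Prod>i\<in>{1..n}. aY l i) = 1 - tv * xx l * yv"
    using assms(1) by (simp add: aY_def)
  have bY_prod: "(\<Prod>i\<in>{1..n}. bY l i) = 1 - tv * xx l * yv * zv"
    using assms(1) by (simp add: bY_def)
  have L: "pm (sg l) (h_tr n k N) * Apol n l =
     ?K * ((\<Prod>p\<in>Ppairs n. pm (sg l) (PPf N p) * aP l p) * (\<Prod>i\<in>{1..n}. pm (sg l) (YYf N i) * aY l i))"
    unfolding h_tr_split sgm.pm_mult
    unfolding pm_Xk[OF assms(1)] pm_Vd[OF assms(1)]
    unfolding sgm.pm_prod prod.distrib aP_prod aY_prod Apol_def
    by (simp only: ac_simps)
  have R: "?K * ((\<Prod>p\<in>Ppairs n. PPf N p * bP l p) * (\<Prod>i\<in>{1..n}. YYf N i * bY l i))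
       = vpow T (-2 * k) * h_tr n k N * Bpol n l"
  proof -
    have "?K * ((\<Prod>p\<in>Ppairs n. PPf N p * bP l p) * (\<Prod>i\<in>{1..n}. YYf N i * bY l i))
       = Xk n k * vpow T (-2 * k) * (?W * ((\<Prod>j\<in>?S. 1 - zv * xx l * xinv j) * (\<Prod>i\<in>?S. 1 - xx i * xinv l)))
         * ?PP * ?YY * (1 - tv * xx l * yv * zv)"
      unfolding prod.distrib bP_prod bY_prod by (simp only: ac_simps)
    also have "\<dots> = Xk n k * vpow T (-2 * k) * (Vd n * (\<Prod>j\<in>?S. zv - xx j * xinv l))
         * ?PP * ?YY * (1 - tv * xx l * yv * zv)"
      by (simp only: W_Vd[OF assms(1)])
    also have "\<dots> = vpow T (-2 * k) * h_tr n k N * Bpol n l"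
      unfolding h_tr_split Bpol_def by (simp only: ac_simps)
    finally show ?thesis .
  qed
  show ?thesis using e3 unfolding L[symmetric] R by (simp add: algebra_simps)
qed


lemma FE:
  assumes "l \<in> {1..n}"
  shows "lmul (Apol n l) (\<lambda>\<nu>. h n k (sgi l \<nu>)) \<mu> = lmul (vpow T (-2 * k) * Bpol n l) (h n k) \<mu>"
proof -
  let ?A = "Apol n l"
  let ?B = "vpow T (-2 * k) * Bpol n l"
  let ?KA = "Poly_Mapping.keys ?A"
  let ?KB = "Poly_Mapping.keys ?B"
  define N where "N = nat (wt \<mu> + 2 * k) + (\<Sum>\<nu>\<in>?KA. nat (wt (sgi l (\<mu> - \<nu>)))) + (\<Sum>\<nu>\<in>?KB. nat (wt (\<mu> - \<nu>))) + 1"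
  have N1: "1 \<le> N" by (simp add: N_def)
  have Nw: "wt \<mu> < int N - 2 * k"
  proof -
    have "nat (wt \<mu> + 2 * k) + 1 \<le> N" by (simp add: N_def)
    then have "int (nat (wt \<mu> + 2 * k)) + 1 \<le> int N" by linarith
    then show ?thesis by linarith
  qed
  have NA: "nat (wt (sgi l (\<mu> - \<nu>))) + 1 \<le> N" if "\<nu> \<in> ?KA" for \<nu>
  proof -
    have "nat (wt (sgi l (\<mu> - \<nu>))) \<le> (\<Sum>\<nu>\<in>?KA. nat (wt (sgi l (\<mu> - \<nu>))))"
      by (rule member_le_sum) (use that in auto)
    then show ?thesis by (simp add: N_def)
  qed
  have NB: "nat (wt (\<mu> - \<nu>)) + 1 \<le> N" if "\<nu> \<in> ?KB" for \<nu>
  proof -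
    have "nat (wt (\<mu> - \<nu>)) \<le> (\<Sum>\<nu>\<in>?KB. nat (wt (\<mu> - \<nu>)))"
      by (rule member_le_sum) (use that in auto)
    then show ?thesis by (simp add: N_def)
  qed
  have "lmul ?A (\<lambda>\<nu>. h n k (sgi l \<nu>)) \<mu> = lmul ?A (Poly_Mapping.lookup (pm (sg l) (h_tr n k N))) \<mu>"
    unfolding lmul_def lookup_pm_sg
    by (rule sum.cong[OF refl]) (simp add: h_eq[OF NA])
  also have "\<dots> = Poly_Mapping.lookup (?A * pm (sg l) (h_tr n k N)) \<mu>"
    by (simp add: lmul_lookup)
  also have "\<dots> = Poly_Mapping.lookup (?B * h_tr n k N) \<mu>"
  proof -
    have "eqv (int N - 2 * k) (pm (sg l) (h_tr n k N) * ?A) (vpow T (-2 * k) * h_tr n k N * Bpol n l)"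
      by (rule CONG[OF assms N1])
    from eqv_lookup[OF this Nw] show ?thesis by (simp add: ac_simps)
  qed
  also have "\<dots> = lmul ?B (Poly_Mapping.lookup (h_tr n k N)) \<mu>"
    by (simp add: lmul_lookup)
  also have "\<dots> = lmul ?B (h n k) \<mu>"
    unfolding lmul_def
    by (rule sum.cong[OF refl]) (simp add: h_eq[OF NB])
  finally show ?thesis .
qed

lemma FE_fun:
  assumes "l \<in> {1..n}"
  shows "lmul (Apol n l) (\<lambda>\<nu>. h n k (sgi l \<nu>)) = lmul (vpow T (-2 * k) * Bpol n l) (h n k)"
  using FE[OF assms] by (simp add: fun_eq_iff)

lemma lookup_xpart: "Poly_Mapping.lookup (xpart \<nu>) v = (if is_xvar v then Poly_Mapping.lookup \<nu> v else 0)"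
  by (simp add: xpart_def lookup_mapp when_def in_keys_iff)

definition rf :: "mono \<Rightarrow> mono" where
  "rf \<nu> = \<nu> - xpart \<nu> - xpart \<nu>"

lemma lookup_rf: "Poly_Mapping.lookup (rf \<nu>) v = (if is_xvar v then - Poly_Mapping.lookup \<nu> v else Poly_Mapping.lookup \<nu> v)"
  by (simp add: rf_def lookup_minus lookup_xpart)

lemma rf_add: "rf (a + b) = rf a + rf b"
  by (rule poly_mapping_eqI) (simp add: lookup_rf lookup_add)

lemma rf_rf: "rf (rf a) = a"
  by (rule poly_mapping_eqI) (simp add: lookup_rf)

interpretation rfm: addmap rf by standard (rule rf_add)

lemma pm_rf_vpow: "pm rf (vpow v e) = (if is_xvar v then vpow v (-e) else vpow v e)"
proof -
  have "rf (Poly_Mapping.single v e) = Poly_Mapping.single v (if is_xvar v then -e else e)"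
    by (rule poly_mapping_eqI) (simp add: lookup_rf lookup_single when_def)
  then show ?thesis by (simp add: vpow_def pm_mon)
qed

abbreviation Xfree :: "mono \<Rightarrow> bool" where
  "Xfree \<mu> \<equiv> (\<forall>i. Poly_Mapping.lookup \<mu> (X i) = 0)"

lemma bracket_lmul: "bracket P F \<mu> = (if Xfree \<mu> then lmul (pm rf P) F \<mu> else 0)"
proof -
  have "lmul (pm rf P) F \<mu> = (\<Sum>\<nu>\<in>Poly_Mapping.keys P. Poly_Mapping.lookup P \<nu> * F (\<mu> - rf \<nu>))"
    by (rule lmul_bij[where g=rf]) (simp_all add: rf_rf)
  moreover have "\<mu> - rf \<nu> = \<mu> - (\<nu> - xpart \<nu>) + xpart \<nu>" for \<nu>
    by (simp add: rf_def algebra_simps)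
  ultimately show ?thesis by (simp add: bracket_def)
qed

lemma CT:
  assumes "Poly_Mapping.lookup \<mu> (X l) = 0"
  shows "lmul G F \<mu> = lmul (pm (sg l) G) (\<lambda>\<nu>. F (sgi l \<nu>)) \<mu>"
proof -
  have s: "sgi l \<mu> = \<mu>" using assms by (simp add: sgi_def)
  have "lmul (pm (sg l) G) (\<lambda>\<nu>. F (sgi l \<nu>)) \<mu> = (\<Sum>\<nu>\<in>Poly_Mapping.keys G. Poly_Mapping.lookup G \<nu> * F (sgi l (\<mu> - sg l \<nu>)))"
    by (rule lmul_bij[where g="sgi l"]) (simp_all add: sgi_sg sg_sgi)
  also have "\<dots> = lmul G F \<mu>"
    by (simp add: lmul_def sgi_diff sgi_sg s)
  finally show ?thesis by simp
qed

lemma pm_sg_Xprod: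
  assumes "l \<in> {1..n}"
  shows "pm (sg l) (\<Prod>i\<in>{1..n}. vpow (X i) (e i)) = (\<Prod>i\<in>{1..n}. vpow (X i) (e i)) * vpow T (2 * e l)"
proof -
  have "pm (sg l) (\<Prod>i\<in>{1..n}. vpow (X i) (e i)) = (\<Prod>i\<in>{1..n}. vpow (X i) (e i) * (if i = l then vpow T (2 * e l) else 1))"
    unfolding sgm.pm_prod by (rule prod.cong) (auto simp: pm_sg_vpow)
  also have "\<dots> = (\<Prod>i\<in>{1..n}. vpow (X i) (e i)) * vpow T (2 * e l)"
    using assms by (simp add: prod.distrib)
  finally show ?thesis .
qed

lemma pm_rf_Xprod:
  "pm rf (\<Prod>i\<in>I. vpow (X i) (e i)) = (\<Prod>i\<in>I. vpow (X i) (- e i))"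
  unfolding rfm.pm_prod by (rule prod.cong) (auto simp: pm_rf_vpow is_xvar_def)

lemma vpow_pow: "vpow v e ^ m = vpow v (int m * e)"
  by (induction m) (simp_all add: vpow_zero vpow_mult algebra_simps)

lemma lmul_vpow: "lmul (vpow v e) F \<mu> = F (\<mu> - Poly_Mapping.single v e)"
  by (simp add: vpow_def lmul_mon)

theorem lemma3p7:
  fixes n :: nat and k :: int and \<beta> :: "nat \<Rightarrow> int" and l :: nat
  assumes "n \<ge> 2" and "1 \<le> l" and "l \<le> n"
  shows "lmul (vpow T (2 * (\<beta> l + k)))
           (bracket ((\<Prod>i\<in>{1..n}. vpow (X i) (\<beta> i))
                     * (1 - vpow T (-1) * yv * xinv l)
                     * (\<Prod>i\<in>{1..n} - {l}. 1 - zv * xx l * xinv i))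
                    (h n k))
       = lmul (vpow Z (int n - 1))
           (bracket ((\<Prod>i\<in>{1..n}. vpow (X i) (\<beta> i))
                     * (1 - tv * zv * yv * xinv l)
                     * (\<Prod>i\<in>{1..n} - {l}. 1 - vpow Z (-1) * xx l * xinv i))
                    (h n k))"
  (is "lmul ?c (bracket ?PL _) = lmul ?z (bracket ?PR _)")
proof
  fix \<mu>
  have l: "l \<in> {1..n}" using assms by auto
  let ?S = "{1..n} - {l}"
  let ?Xb = "\<Prod>i\<in>{1..n}. vpow (X i) (- \<beta> i)"
  have XfT: "Xfree (\<mu> - Poly_Mapping.single T e) \<longleftrightarrow> Xfree \<mu>" for e
    by (simp add: lookup_minus lookup_single)
  have XfZ: "Xfree (\<mu> - Poly_Mapping.single Z e) \<longleftrightarrow> Xfree \<mu>" for e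
    by (simp add: lookup_minus lookup_single)
  show "lmul ?c (bracket ?PL (h n k)) \<mu> = lmul ?z (bracket ?PR (h n k)) \<mu>"
  proof (cases "Xfree \<mu>")
    case False
    show ?thesis
      by (simp only: lmul_vpow bracket_lmul XfT XfZ if_not_P[OF False])
  next
    case True
    have "lmul ?c (bracket ?PL (h n k)) \<mu> = lmul ?c (lmul (pm rf ?PL) (h n k)) \<mu>"
      using True by (simp add: vpow_def lmul_mon bracket_lmul XfT)
    also have "\<dots> = lmul (?c * pm rf ?PL) (h n k) \<mu>" by (simp add: lmul_mult)
    also have "\<dots> = lmul (pm (sg l) (?c * pm rf ?PL)) (\<lambda>\<nu>. h n k (sgi l \<nu>)) \<mu>"
      using True by (intro CT) simp
    also have "pm (sg l) (?c * pm rf ?PL) = (vpow T (2 * k) * ?Xb) * Apol n l"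
    proof -
      have r: "pm rf ?PL = ?Xb * (1 - vpow T (-1) * yv * xx l) * (\<Prod>i\<in>?S. 1 - zv * xinv l * xx i)"
        by (simp add: rfm.pm_mult pm_diff rfm.pm_one pm_rf_Xprod rfm.pm_prod pm_rf_vpow is_xvar_def)
      have a1: "pm (sg l) (1 - vpow T (-1) * yv * xx l) = 1 - tv * xx l * yv"
      proof -
        have "pm (sg l) (1 - vpow T (-1) * yv * xx l) = 1 - (vpow T (-1) * vpow T 2) * yv * xx l"
          by (simp add: sgm.pm_mult pm_diff sgm.pm_one pm_sg_vpow ac_simps)
        then show ?thesis by (simp add: vpow_mult ac_simps)
      qed
      have a2: "pm (sg l) (\<Prod>i\<in>?S. 1 - zv * xinv l * xx i) = (\<Prod>i\<in>?S. 1 - zv * xx i * xinv l * qinv)"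
        unfolding sgm.pm_prod
        by (rule prod.cong[OF refl]) (auto simp: sgm.pm_mult pm_diff sgm.pm_one pm_sg_vpow ac_simps)
      have a3: "pm (sg l) ?c = ?c" by (simp add: pm_sg_vpow)
      have a4: "?c * (?Xb * vpow T (2 * - \<beta> l)) = vpow T (2 * k) * ?Xb"
      proof -
        have "?c * (?Xb * vpow T (2 * - \<beta> l)) = (?c * vpow T (2 * - \<beta> l)) * ?Xb" by (simp add: ac_simps)
        also have "?c * vpow T (2 * - \<beta> l) = vpow T (2 * k)" by (simp add: vpow_mult algebra_simps)
        finally show ?thesis by (simp add: ac_simps)
      qed
      have "pm (sg l) (?c * pm rf ?PL) = (?c * (?Xb * vpow T (2 * - \<beta> l))) * Apol n l"
        unfolding r sgm.pm_mult a1 a2 a3 pm_sg_Xprod[OF l, of "\<lambda>i. - \<beta> i"]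
        by (simp add: Apol_def ac_simps)
      then show ?thesis by (simp only: a4)
    qed
    also have "lmul ((vpow T (2 * k) * ?Xb) * Apol n l) (\<lambda>\<nu>. h n k (sgi l \<nu>)) \<mu>
        = lmul ((vpow T (2 * k) * ?Xb) * (vpow T (-2 * k) * Bpol n l)) (h n k) \<mu>"
      by (simp only: lmul_mult FE_fun[OF l])
    also have "(vpow T (2 * k) * ?Xb) * (vpow T (-2 * k) * Bpol n l) = ?Xb * Bpol n l"
    proof -
      have "vpow T (2 * k) * vpow T (-2 * k) = 1" by (simp add: vpow_mult vpow_zero)
      moreover have "(vpow T (2 * k) * ?Xb) * (vpow T (-2 * k) * Bpol n l) = (vpow T (2 * k) * vpow T (-2 * k)) * (?Xb * Bpol n l)"
        by (simp only: ac_simps)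
      ultimately show ?thesis by simp
    qed
    also have "?Xb * Bpol n l = ?z * pm rf ?PR"
    proof -
      have r: "pm rf ?PR = ?Xb * (1 - tv * zv * yv * xx l) * (\<Prod>i\<in>?S. 1 - vpow Z (-1) * xinv l * xx i)"
        by (simp add: rfm.pm_mult pm_diff rfm.pm_one pm_rf_Xprod rfm.pm_prod pm_rf_vpow is_xvar_def)
      have cS: "card ?S = n - 1" using l by simp
      have z: "?z = (\<Prod>i\<in>?S. zv)"
        using cS assms(1) by (simp add: vpow_pow of_nat_diff)
      have zz: "zv * vpow Z (-1) = 1" by (simp add: vpow_mult vpow_zero)
      have FZ: "(\<Prod>i\<in>?S. zv) * (\<Prod>i\<in>?S. 1 - vpow Z (-1) * xinv l * xx i) = (\<Prod>i\<in>?S. zv - xx i * xinv l)"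
      proof -
        have "zv * (1 - vpow Z (-1) * xinv l * xx i) = zv - xx i * xinv l" for i
        proof -
          have "zv * (1 - vpow Z (-1) * xinv l * xx i) = zv - (zv * vpow Z (-1)) * (xx i * xinv l)"
            by (simp add: algebra_simps)
          then show ?thesis by (simp add: zz)
        qed
        then show ?thesis unfolding prod.distrib[symmetric] by (intro prod.cong refl)
      qed
      have "?z * pm rf ?PR = ?Xb * (1 - tv * zv * yv * xx l) * ((\<Prod>i\<in>?S. zv) * (\<Prod>i\<in>?S. 1 - vpow Z (-1) * xinv l * xx i))"
        unfolding r z by (simp only: ac_simps)
      also have "\<dots> = ?Xb * Bpol n l" unfolding FZ Bpol_def by (simp only: ac_simps)
      finally show ?thesis by simp
    qed
    also have "lmul (?z * pm rf ?PR) (h n k) \<mu> = lmul ?z (bracket ?PR (h n k)) \<mu>"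
      using True by (simp add: lmul_mult vpow_def lmul_mon bracket_lmul XfZ)
    finally show ?thesis .
  qed
qed

end
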